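(* Let $n\ge1$ be an integer. Then $n\equiv 0$ or $1 \pmod 4$ if and only if every permutation $(a_1,\dots,a_n)$ of $\{1,\dots,n\}$ for which the $n-1$ differences $|a_2-a_1|,\dots,|a_n-a_{n-1}|$ are pairwise distinct satisfies $a_1\equiv a_n \pmod 2$. *)

theory Defs
  imports Main
begin

text \<open>A permutation (a_1,...,a_n) of {1..n} is represented as a list of integers
  (0-indexed) whose elements are exactly 1..n, each once.\<close>
definition is_perm_list :: "nat \<Rightarrow> int list \<Rightarrow> bool" where
  "is_perm_list n a \<longleftrightarrow> length a = n \<and> distinct a \<and> set a = {1..int n}"

definition distinct_diffs :: "int list \<Rightarrow> bool" where
  "distinct_diffs a \<longleftrightarrow>
     inj_on (\<lambda>i. \<bar>a ! (Suc i) - a ! i\<bar>) {..<length a - 1}"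

end

theory Submission
  imports Defs
begin

lemma diffs_image:
  assumes p: "is_perm_list n a" and d: "distinct_diffs a"
  shows "(\<lambda>i. \<bar>a ! (Suc i) - a ! i\<bar>) ` {..<n-1} = {1..int n - 1}"
proof -
  let ?D = "\<lambda>i. \<bar>a ! (Suc i) - a ! i\<bar>"
  have len: "length a = n" and dist: "distinct a" and st: "set a = {1..int n}"
    using p unfolding is_perm_list_def by auto
  have sub: "?D ` {..<n-1} \<subseteq> {1..int n - 1}"
  proof
    fix x assume "x \<in> ?D ` {..<n-1}"
    then obtain i where i: "i < n - 1" and x: "x = ?D i" by auto
    have "a ! i \<in> set a" "a ! Suc i \<in> set a" using i len by auto
    hence r: "a ! i \<in> {1..int n}" "a ! Suc i \<in> {1..int n}" using st by auto
    have "a ! i \<noteq> a ! Suc i" using dist i len by (simp add: nth_eq_iff_index_eq)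
    thus "x \<in> {1..int n - 1}" using r x by auto
  qed
  have inj: "inj_on ?D {..<n-1}" using d len unfolding distinct_diffs_def by simp
  have "card (?D ` {..<n-1}) = n - 1" using card_image[OF inj] by simp
  moreover have "card {1..int n - 1} = n - 1" by simp
  ultimately show ?thesis using sub by (intro card_subset_eq) auto
qed

lemma diffs_sum:
  assumes p: "is_perm_list n a" and d: "distinct_diffs a"
  shows "(\<Sum>i<n-1. \<bar>a ! (Suc i) - a ! i\<bar>) = (int n * (int n - 1)) div 2"
proof -
  let ?D = "\<lambda>i. \<bar>a ! (Suc i) - a ! i\<bar>"
  have len: "length a = n" using p unfolding is_perm_list_def by auto
  have inj: "inj_on ?D {..<n-1}" using d len unfolding distinct_diffs_def by simp
  have "(\<Sum>i<n-1. ?D i) = \<Sum>(?D ` {..<n-1})" using sum.reindex[OF inj, of "\<lambda>x. x"] by (simp add: o_def)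
  also have "\<dots> = \<Sum>{1..int n - 1}" using diffs_image[OF p d] by simp
  also have "\<dots> = (int n * (int n - 1)) div 2"
  proof (cases "n = 0")
    case True then show ?thesis by simp
  next
    case False
    then have "1 \<le> int n - 1 \<or> n = 1" by linarith
    then show ?thesis
    proof
      assume "1 \<le> int n - 1"
      then show ?thesis by (simp add: Sum_Icc_int algebra_simps)
    qed simp
  qed
  finally show ?thesis .
qed

lemma diffs_parity:
  assumes p: "is_perm_list n a" and d: "distinct_diffs a" and n: "n \<ge> 1"
  shows "(a ! 0 mod 2 = a ! (n - 1) mod 2) \<longleftrightarrow> even ((int n * (int n - 1)) div 2)"
proof -
  let ?D = "\<lambda>i. \<bar>a ! (Suc i) - a ! i\<bar>"
  have tel: "(\<Sum>i<n-1. a ! (Suc i) - a ! i) = a ! (n-1) - a ! 0"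
    by (rule sum_lessThan_telescope)
  have ev: "even (\<Sum>i<n-1. ?D i - (a ! (Suc i) - a ! i))"
  proof (rule dvd_sum)
    fix i show "2 dvd (?D i - (a ! (Suc i) - a ! i))"
      by (cases "a ! (Suc i) - a ! i \<ge> 0") auto
  qed
  have "(\<Sum>i<n-1. ?D i - (a ! (Suc i) - a ! i)) = (int n * (int n - 1)) div 2 - (a ! (n-1) - a ! 0)"
    using diffs_sum[OF p d] tel by (simp add: sum_subtractf)
  with ev have "even ((int n * (int n - 1)) div 2) \<longleftrightarrow> even (a ! (n-1) - a ! 0)" by auto
  also have "\<dots> \<longleftrightarrow> a ! 0 mod 2 = a ! (n - 1) mod 2"
    by (metis even_iff_mod_2_eq_zero mod_diff_eq mod_eq_dvd_iff)
  finally show ?thesis by simp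
qed

lemma parity_n:
  "even ((int n * (int n - 1)) div 2) \<longleftrightarrow> (n mod 4 = 0 \<or> n mod 4 = 1)"
proof -
  obtain q r where n: "n = 4*q + r" and r: "r < 4" by (metis div_mult_mod_eq mod_less_divisor zero_less_numeral mult.commute)
  have "r = 0 \<or> r = 1 \<or> r = 2 \<or> r = 3" using r by auto
  then show ?thesis
  proof (elim disjE)
    assume "r = 0"
    then have "(int n * (int n - 1)) div 2 = 2 * (int q * (4 * int q - 1))" using n by (simp add: algebra_simps)
    moreover have "n mod 4 = 0" using n \<open>r=0\<close> by presburger
    ultimately show ?thesis by simp
  next
    assume "r = 1"
    then have "(int n * (int n - 1)) div 2 = 2 * (int q * (4 * int q + 1))" using n by (simp add: algebra_simps)
    moreover have "n mod 4 = 1" using n \<open>r=1\<close> by presburger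
    ultimately show ?thesis by simp
  next
    assume "r = 2"
    then have "(int n * (int n - 1)) div 2 = 2 * (4 * int q * int q + 3 * int q) + 1" using n by (simp add: algebra_simps)
    moreover have "n mod 4 = 2" using n \<open>r=2\<close> by presburger
    ultimately show ?thesis by simp
  next
    assume "r = 3"
    then have "(int n * (int n - 1)) div 2 = 2 * (4 * int q * int q + 5 * int q + 1) + 1" using n by (simp add: algebra_simps)
    moreover have "n mod 4 = 3" using n \<open>r=3\<close> by presburger
    ultimately show ?thesis by simp
  qed
qed

definition zf :: "nat \<Rightarrow> nat \<Rightarrow> int" where
  "zf n i = (if even i then int (i div 2) + 1 else int n - int (i div 2))"
lemma zf_even: "zf n (2*k) = int k + 1" unfolding zf_def by simp
lemma zf_odd: "zf n (Suc (2*k)) = int n - int k" unfolding zf_def by simp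
lemma zf_inj: "inj_on (zf n) {0..<n}"
proof
  fix i j assume i: "i \<in> {0..<n}" and j: "j \<in> {0..<n}" and e: "zf n i = zf n j"
  show "i = j"
  proof (cases "even i"; cases "even j")
    assume "even i" "even j" thus ?thesis using e by (auto elim!: evenE simp: zf_even)
  next
    assume "odd i" "odd j" thus ?thesis using e by (auto elim!: oddE simp: zf_odd)
  next
    assume "even i" "odd j" thus ?thesis using e i j by (auto elim!: evenE oddE simp: zf_even zf_odd)
  next
    assume "odd i" "even j" thus ?thesis using e i j by (auto elim!: evenE oddE simp: zf_even zf_odd)
  qed
qed

lemma zf_range: "i < n \<Longrightarrow> zf n i \<in> {1..int n}"
  by (cases "even i") (auto elim!: evenE oddE simp: zf_even zf_odd)

lemma zf_diff: "Suc i < n \<Longrightarrow> \<bar>zf n (Suc i) - zf n i\<bar> = int n - 1 - int i"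
proof (cases "even i")
  case True then obtain k where k: "i = 2*k" by (auto elim: evenE)
  assume "Suc i < n"
  then show ?thesis using k zf_odd[of n k] zf_even[of n k] by simp
next
  case False then obtain k where k: "i = Suc (2*k)" by (auto elim: oddE)
  assume "Suc i < n"
  moreover have "Suc i = 2 * Suc k" using k by simp
  ultimately show ?thesis using k zf_odd[of n k] zf_even[of n "Suc k"] by simp
qed

lemma zz_perm: "is_perm_list n (map (zf n) [0..<n])"
proof -
  let ?a = "map (zf n) [0..<n]"
  have d: "distinct ?a" using zf_inj by (simp add: distinct_map)
  have sub: "set ?a \<subseteq> {1..int n}" using zf_range by auto
  have "card (set ?a) = n" using distinct_card[OF d] by simp
  hence "set ?a = {1..int n}" using sub by (intro card_subset_eq) auto
  thus ?thesis using d unfolding is_perm_list_def by simp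
qed

lemma zz_diffs: "distinct_diffs (map (zf n) [0..<n])"
  unfolding distinct_diffs_def
proof (rule inj_onI)
  fix i j assume i: "i \<in> {..<length (map (zf n) [0..<n]) - 1}" and j: "j \<in> {..<length (map (zf n) [0..<n]) - 1}"
    and e: "\<bar>map (zf n) [0..<n] ! Suc i - map (zf n) [0..<n] ! i\<bar> = \<bar>map (zf n) [0..<n] ! Suc j - map (zf n) [0..<n] ! j\<bar>"
  have "Suc i < n" "Suc j < n" using i j by auto
  with e show "i = j" using zf_diff by simp
qed

theorem corollary1:
  fixes n :: nat
  assumes "n \<ge> 1"
  shows "(n mod 4 = 0 \<or> n mod 4 = 1) \<longleftrightarrow>
    (\<forall>a. is_perm_list n a \<and> distinct_diffs a \<longrightarrow> a ! 0 mod 2 = a ! (n - 1) mod 2)"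
proof
  assume h: "n mod 4 = 0 \<or> n mod 4 = 1"
  show "\<forall>a. is_perm_list n a \<and> distinct_diffs a \<longrightarrow> a ! 0 mod 2 = a ! (n - 1) mod 2"
  proof (intro allI impI)
    fix a assume "is_perm_list n a \<and> distinct_diffs a"
    then show "a ! 0 mod 2 = a ! (n - 1) mod 2"
      using diffs_parity[OF _ _ assms, of a] parity_n[of n] h by simp
  qed
next
  assume h: "\<forall>a. is_perm_list n a \<and> distinct_diffs a \<longrightarrow> a ! 0 mod 2 = a ! (n - 1) mod 2"
  have "map (zf n) [0..<n] ! 0 mod 2 = map (zf n) [0..<n] ! (n - 1) mod 2"
    using h zz_perm[of n] zz_diffs[of n] by simp
  thus "n mod 4 = 0 \<or> n mod 4 = 1"
    using diffs_parity[OF zz_perm zz_diffs assms] parity_n[of n] by simp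
qed

end
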